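(* For all non-negative integers $p$ and $r$, $$H_{r,p+1/2}=\frac{1}{2^{2r-1}}\binom{2p}{p}^{-1}\binom{2(r+p)}{r+p}\binom{r+p}{r}\left(O_{r+p}-O_p\right).$$
   Context: For complex $x$ not a negative integer, $H_x=\sum_{k\ge1}\left(\frac1k-\frac1{k+x}\right)$, and for complex $x$, $\binom{x}{k}=\frac{x(x-1)\cdots(x-k+1)}{k!}$. Hyperharmonic numbers: for integer $n\ge0$ and complex $q$ with $q-1$ not a negative integer (i.e. $q\notin\{0,-1,-2,\dots\}$), $H_{n,q}=\binom{n+q-1}{n}\left(H_{n+q-1}-H_{q-1}\right)$; also $H_{n,0}=\frac1n$ for $n\ge1$. Equivalently $\sum_{n\ge0}H_{n,q}z^n=\frac{-\ln(1-z)}{(1-z)^q}$, so $H_{0,q}=0$, $H_{n,1}=H_n$, and $H_{n,q}=\sum_{i=1}^nH_{i,q-1}$. The odd harmonic numbers are $O_n=\sum_{k=1}^n\frac{1}{2k-1}$, $O_0=0$. *)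

theory Defs
  imports "HOL-Analysis.Analysis"
begin

definition gen_harm :: "complex \<Rightarrow> complex" where
  "gen_harm x = (\<Sum>k. 1 / of_nat (Suc k) - 1 / (of_nat (Suc k) + x))"

definition hyperharm :: "nat \<Rightarrow> complex \<Rightarrow> complex" where
  "hyperharm n q =
     (if q = 0 then 1 / of_nat n
      else ((of_nat n + q - 1) gchoose n) * (gen_harm (of_nat n + q - 1) - gen_harm (q - 1)))"

definition odd_harm :: "nat \<Rightarrow> real" where
  "odd_harm n = (\<Sum>k=1..n. 1 / (2 * real k - 1))"

end

theory Submission
  imports Defs
begin

lemma gen_harm_Digamma: "gen_harm x = Digamma (x+1) + euler_mascheroni"
  unfolding gen_harm_def Digamma_def
  by (simp add: divide_inverse add_ac)

lemma harm_diff: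
  fixes q :: complex
  assumes "\<And>j. q + of_nat j \<noteq> 0"
  shows "gen_harm (of_nat n + q - 1) - gen_harm (q - 1) = (\<Sum>j<n. 1 / (q + of_nat j))"
proof (induction n)
  case 0 then show ?case by simp
next
  case (Suc n)
  have "Digamma (of_nat n + q + 1) = Digamma (of_nat n + q) + 1/(q + of_nat n)"
    using Digamma_plus1[of "of_nat n + q"] assms[of n] by (simp add: add_ac)
  then show ?case using Suc by (simp add: gen_harm_Digamma add_ac)
qed

lemma poch_half:
  "pochhammer (of_nat p + 1/2 :: complex) r * 4^r * fact (r+p) * fact (2*p)
     = fact (2*(r+p)) * fact p"
proof (induction r)
  case 0 then show ?case by simp
next
  case (Suc r)
  have f1: "(fact (Suc r + p) :: complex) = fact (r+p) * (of_nat r + of_nat p + 1)"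
    by (simp add: algebra_simps)
  have "2*(Suc r + p) = Suc (Suc (2*(r+p)))" by simp
  then have f2: "(fact (2*(Suc r + p)) :: complex) = fact (2*(r+p)) * (2 * of_nat r + 2 * of_nat p + 1) * (2 * of_nat r + 2 * of_nat p + 2)"
    by (simp add: algebra_simps)
  have "pochhammer (of_nat p + 1/2 :: complex) (Suc r) * 4^(Suc r) * fact (Suc r+p) * fact (2*p)
     = (pochhammer (of_nat p + 1/2 :: complex) r * 4^r * fact (r+p) * fact (2*p)) *
       ((of_nat p + 1/2 + of_nat r) * 4 * (of_nat r + of_nat p + 1))"
    by (simp add: pochhammer_Suc f1 algebra_simps)
  also have "\<dots> = fact (2*(r+p)) * fact p * ((of_nat p + 1/2 + of_nat r) * 4 * (of_nat r + of_nat p + 1))"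
    by (simp only: Suc.IH)
  also have "\<dots> = fact (2*(r+p)) * (2 * of_nat r + 2 * of_nat p + 1) * (2 * of_nat r + 2 * of_nat p + 2) * fact p"
    by (simp add: field_simps)
  also have "\<dots> = fact (2*(Suc r+p)) * fact p"
    by (simp only: f2)
  finally show ?case .
qed

lemma odd_sum:
  "(\<Sum>j<r. 1 / (of_nat p + 1/2 + of_nat j :: complex)) = 2 * complex_of_real (odd_harm (r+p) - odd_harm p)"
proof (induction r)
  case 0 then show ?case by simp
next
  case (Suc r)
  have "odd_harm (Suc (r+p)) = odd_harm (r+p) + 1 / (2 * real (Suc (r+p)) - 1)"
    unfolding odd_harm_def by simp
  moreover have "(1 / (of_nat p + 1/2 + of_nat r :: complex)) = 2 * complex_of_real (1 / (2 * real (Suc (r+p)) - 1))"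
    by (simp add: field_simps)
  ultimately show ?case using Suc by (simp add: algebra_simps)
qed

theorem lemma6:
  fixes p r :: nat
  shows "hyperharm r (of_nat p + 1/2) =
    complex_of_real ((2::real) powi (- (2 * int r - 1)) / real (2*p choose p)
      * real (2*(r+p) choose (r+p)) * real ((r+p) choose r)
      * (odd_harm (r+p) - odd_harm p))"
proof -
  define q :: complex where "q = of_nat p + 1/2"
  define D where "D = odd_harm (r+p) - odd_harm p"
  have qj: "q + of_nat j \<noteq> 0" for j
  proof
    assume "q + of_nat j = 0"
    then have "Re (q + of_nat j) = 0" by simp
    then show False unfolding q_def by simp
  qed
  have qnz: "q \<noteq> 0" using qj[of 0] by simp
  have g: "(of_nat r + q - 1) gchoose r = pochhammer q r / fact r"
    by (simp add: gbinomial_pochhammer')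
  have h: "hyperharm r q = pochhammer q r / fact r * (2 * complex_of_real D)"
  proof -
    have "hyperharm r q = ((of_nat r + q - 1) gchoose r) * (gen_harm (of_nat r + q - 1) - gen_harm (q - 1))"
      using qnz by (simp add: hyperharm_def)
    also have "\<dots> = pochhammer q r / fact r * (\<Sum>j<r. 1 / (q + of_nat j))"
      by (simp only: g harm_diff[OF qj])
    also have "(\<Sum>j<r. 1 / (q + of_nat j)) = 2 * complex_of_real D"
      unfolding q_def D_def by (rule odd_sum)
    finally show ?thesis .
  qed
  have P: "pochhammer q r = fact (2*(r+p)) * fact p / (4^r * fact (r+p) * fact (2*p))"
    using poch_half[of p r] unfolding q_def by (simp add: field_simps)
  have pw: "(2::real) powi (- (2 * int r - 1)) = 2 / 4^r"
    proof -
    have "- (2 * int r - 1) = 1 - int (2*r)" by simp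
    moreover have "(2::real) powi (int (2*r)) = 4^r"
      by (simp only: power_int_of_nat power_mult) simp
    ultimately show ?thesis by (simp add: power_int_diff)
  qed
  show ?thesis
    unfolding q_def[symmetric] D_def[symmetric] h P pw
    by (simp add: binomial_fact field_simps)
qed

end
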